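(* Let $\Omega\subset\mathbb{R}^2$ be a convex open domain with compact closure containing the origin, and let $\sigma$ be arclength measure on $\partial\Omega$. Define $$\mathcal{M}f(x)=\sup_{k\in\mathbb{Z}}\Big|\int_{\partial\Omega} f(x-2^k y)\,d\sigma(y)\Big|.$$ For $\theta\in S^1$ let $\ell^+(\theta)$ be the unique affine line perpendicular to $\theta$ meeting $\partial\Omega$ such that $\Omega\subset\{y-t\theta: t>0,\ y\in\ell^+(\theta)\}$, and $\ell^-(\theta)$ the unique affine line perpendicular to $\theta$ meeting $\partial\Omega$ such that $\Omega\subset\{y+t\theta: t>0,\ y\in\ell^-(\theta)\}$. For $\delta>0$ let $\mathcal{C}^\pm(\theta,\delta)=\{y\in\partial\Omega:\mathrm{dist}(y,\ell^\pm(\theta))\le\delta\}$ and $\Lambda(\theta,\delta)=\max_\pm\sigma(\mathcal{C}^\pm(\theta,\delta))$. Let $\delta_0>0$ be such that for all $\theta\in S^1$ and all $\delta<\delta_0$ the arcs $\mathcal{C}^+(\theta,\delta)$ and $\mathcal{C}^-(\theta,\delta)$ are disjoint. Then for every $1\le q<\infty$ there is $c>0$ such that $$\sup_{\|f\|_q=1}\|\mathcal{M}f\|_q\ \ge\ c\,\sup_{\theta\in S^1}\Big(\int_0^{\delta_0}\Lambda(\theta,\delta)^q\,\frac{d\delta}{\delta}\Big)^{1/q}.$$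
   Context: Both sides may be $+\infty$; in particular, if $\mathcal{M}$ is bounded on $L^q(\mathbb{R}^2)$ then $\sup_{\theta}\int_0^{\delta_0}\Lambda(\theta,\delta)^q\,d\delta/\delta<\infty$. *)

theory Defs
  imports "HOL-Analysis.Analysis"
begin

type_synonym pt = "real^2"

text \<open>One-dimensional Hausdorff outer measure (normalised so that it equals length on segments).\<close>
definition hausdorff1 :: "pt set \<Rightarrow> ennreal" where
  "hausdorff1 A = (SUP d\<in>{0<..}. INF C\<in>{C :: nat \<Rightarrow> pt set.
        A \<subseteq> (\<Union>i. C i) \<and> (\<forall>i. bounded (C i) \<and> diameter (C i) \<le> d)}.
        (\<Sum>i. ennreal (diameter (C i))))"

definition arclength :: "pt set \<Rightarrow> pt measure" where
  "arclength \<Omega> = measure_of UNIV (sets borel) (\<lambda>A. hausdorff1 (A \<inter> frontier \<Omega>))"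

definition maxop :: "pt set \<Rightarrow> (pt \<Rightarrow> real) \<Rightarrow> pt \<Rightarrow> ennreal" where
  "maxop \<Omega> f x = (SUP k::int. ennreal \<bar>integral\<^sup>L (arclength \<Omega>)
        (\<lambda>y. f (x - (2 powr real_of_int k) *\<^sub>R y))\<bar>)"

definition enn_powr :: "real \<Rightarrow> ennreal \<Rightarrow> ennreal" where
  "enn_powr q a = (if a = \<infinity> then \<infinity> else ennreal (enn2real a powr q))"

definition enn_root :: "real \<Rightarrow> ennreal \<Rightarrow> ennreal" where
  "enn_root q a = (if a = \<infinity> then \<infinity> else ennreal (enn2real a powr (1 / q)))"

definition lq_norm_enn :: "real \<Rightarrow> (pt \<Rightarrow> ennreal) \<Rightarrow> ennreal" where
  "lq_norm_enn q g = enn_root q (\<integral>\<^sup>+ x. enn_powr q (g x) \<partial>lborel)"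

definition lq_norm :: "real \<Rightarrow> (pt \<Rightarrow> real) \<Rightarrow> ennreal" where
  "lq_norm q f = lq_norm_enn q (\<lambda>x. ennreal \<bar>f x\<bar>)"

definition Cc :: "(pt \<Rightarrow> real) \<Rightarrow> bool" where
  "Cc f \<longleftrightarrow> continuous_on UNIV f \<and> compact (closure {x. f x \<noteq> 0})"

definition lplus :: "pt set \<Rightarrow> pt \<Rightarrow> pt set" where
  "lplus \<Omega> \<theta> = (THE L. (\<exists>c. L = {y. y \<bullet> \<theta> = c}) \<and> L \<inter> frontier \<Omega> \<noteq> {} \<and>
      \<Omega> \<subseteq> {y - t *\<^sub>R \<theta> | y t. t > 0 \<and> y \<in> L})"

definition lminus :: "pt set \<Rightarrow> pt \<Rightarrow> pt set" where
  "lminus \<Omega> \<theta> = (THE L. (\<exists>c. L = {y. y \<bullet> \<theta> = c}) \<and> L \<inter> frontier \<Omega> \<noteq> {} \<and>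
      \<Omega> \<subseteq> {y + t *\<^sub>R \<theta> | y t. t > 0 \<and> y \<in> L})"

definition Cplus :: "pt set \<Rightarrow> pt \<Rightarrow> real \<Rightarrow> pt set" where
  "Cplus \<Omega> \<theta> \<delta> = {y \<in> frontier \<Omega>. infdist y (lplus \<Omega> \<theta>) \<le> \<delta>}"

definition Cminus :: "pt set \<Rightarrow> pt \<Rightarrow> real \<Rightarrow> pt set" where
  "Cminus \<Omega> \<theta> \<delta> = {y \<in> frontier \<Omega>. infdist y (lminus \<Omega> \<theta>) \<le> \<delta>}"

definition Lambda :: "pt set \<Rightarrow> pt \<Rightarrow> real \<Rightarrow> real" where
  "Lambda \<Omega> \<theta> \<delta> = max (measure (arclength \<Omega>) (Cplus \<Omega> \<theta> \<delta>))
                        (measure (arclength \<Omega>) (Cminus \<Omega> \<theta> \<delta>))"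

end

theory Submission
  imports Defs
begin

definition perp :: "real^2 \<Rightarrow> real^2" where
  "perp v = vector [-(v$2), v$1]"

lemma inner2: "(x::real^2) \<bullet> y = x$1 * y$1 + x$2 * y$2"
  by (simp add: inner_vec_def sum_2)

lemma perp_inner: "v \<bullet> perp v = 0"
  by (simp add: inner2 perp_def)

lemma perp_norm: "norm (perp v) = norm v"
  by (simp add: norm_eq_sqrt_inner inner2 perp_def algebra_simps)

lemma norm2_sq: "norm (x::real^2) ^2 = x$1^2 + x$2^2"
  by (subst power2_norm_eq_inner) (simp add: inner2 power2_eq_square)

lemma decomp:
  assumes "norm v = 1"
  shows "x = (x \<bullet> v) *\<^sub>R v + (x \<bullet> perp v) *\<^sub>R perp v"
proof -
  have n: "v$1^2 + v$2^2 = 1" using assms norm2_sq[of v] by simp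
  have c1: "((x \<bullet> v) *\<^sub>R v + (x \<bullet> perp v) *\<^sub>R perp v)$1 = x$1 * (v$1^2+v$2^2)"
    by (simp add: inner2 perp_def algebra_simps power2_eq_square)
  have c2: "((x \<bullet> v) *\<^sub>R v + (x \<bullet> perp v) *\<^sub>R perp v)$2 = x$2 * (v$1^2+v$2^2)"
    by (simp add: inner2 perp_def algebra_simps power2_eq_square)
  show ?thesis using c1 c2 n by (simp add: vec_eq_iff forall_2)
qed

lemma perp_perp_inner: "norm v = 1 \<Longrightarrow> perp v \<bullet> perp v = 1"
  by (metis norm_eq_1 perp_norm)

definition hs :: "pt set \<Rightarrow> pt \<Rightarrow> real" where
  "hs \<Omega> \<theta> = Sup ((\<lambda>z. z \<bullet> \<theta>) ` closure \<Omega>)"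

locale dom =
  fixes \<Omega> :: "pt set"
  assumes op: "open \<Omega>" and cv: "convex \<Omega>" and cp: "compact (closure \<Omega>)" and z: "0 \<in> \<Omega>"
begin

lemma ne: "closure \<Omega> \<noteq> {}" using z closure_subset by blast

lemma bdd: "bdd_above ((\<lambda>z. z \<bullet> \<theta>) ` closure \<Omega>)"
  using cp by (intro compact_imp_bounded[THEN bounded_imp_bdd_above] compact_continuous_image continuous_intros) auto

lemma hs_ge: "z \<in> closure \<Omega> \<Longrightarrow> z \<bullet> \<theta> \<le> hs \<Omega> \<theta>"
  unfolding hs_def using bdd by (intro cSup_upper) auto

lemma hs_attained: "\<exists>p\<in>closure \<Omega>. p \<bullet> \<theta> = hs \<Omega> \<theta>"
proof -
  obtain p where p: "p \<in> closure \<Omega>" "\<And>z. z \<in> closure \<Omega> \<Longrightarrow> z \<bullet> \<theta> \<le> p \<bullet> \<theta>"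
  proof -
    have "compact ((\<lambda>z. z \<bullet> \<theta>) ` closure \<Omega>)" using cp by (intro compact_continuous_image continuous_intros)
    from compact_attains_sup[OF this] ne obtain v where "v \<in> (\<lambda>z. z \<bullet> \<theta>) ` closure \<Omega>" "\<forall>w \<in> (\<lambda>z. z \<bullet> \<theta>) ` closure \<Omega>. w \<le> v" by blast
    thus ?thesis using that by blast
  qed
  have "hs \<Omega> \<theta> \<le> p \<bullet> \<theta>" unfolding hs_def using ne p by (intro cSup_least) auto
  moreover have "p \<bullet> \<theta> \<le> hs \<Omega> \<theta>" using hs_ge[OF p(1)] .
  ultimately show ?thesis using p(1) by (intro bexI[of _ p]) auto
qed

lemma hs_lt: assumes "norm \<theta> = 1" "z \<in> \<Omega>" shows "z \<bullet> \<theta> < hs \<Omega> \<theta>"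
proof -
  obtain e where e: "e > 0" "ball z e \<subseteq> \<Omega>" using op assms(2) open_contains_ball by blast
  have "z + (e/2) *\<^sub>R \<theta> \<in> ball z e" using e assms(1) by (simp add: dist_norm)
  hence "z + (e/2) *\<^sub>R \<theta> \<in> closure \<Omega>" using e closure_subset by blast
  from hs_ge[OF this] have "z \<bullet> \<theta> + e/2 * (\<theta> \<bullet> \<theta>) \<le> hs \<Omega> \<theta>" by (simp add: inner_add_left)
  moreover have "\<theta> \<bullet> \<theta> = 1" using assms(1) by (simp add: norm_eq_1)
  ultimately show ?thesis using e by simp
qed

lemma frontier_eq: "frontier \<Omega> = closure \<Omega> - \<Omega>"
  using op by (simp add: frontier_def interior_open)

lemma lplus_eq: assumes "norm \<theta> = 1" shows "lplus \<Omega> \<theta> = {y. y \<bullet> \<theta> = hs \<Omega> \<theta>}"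
  unfolding lplus_def
proof (rule the_equality)
  have tt: "\<theta> \<bullet> \<theta> = 1" using assms by (simp add: norm_eq_1)
  obtain p where p: "p \<in> closure \<Omega>" "p \<bullet> \<theta> = hs \<Omega> \<theta>" using hs_attained by blast
  have "p \<notin> \<Omega>" using hs_lt[OF assms] p by fastforce
  hence "p \<in> frontier \<Omega>" using p frontier_eq by blast
  moreover have "\<Omega> \<subseteq> {y - t *\<^sub>R \<theta> | y t. t > 0 \<and> y \<in> {y. y \<bullet> \<theta> = hs \<Omega> \<theta>}}"
  proof
    fix z assume z: "z \<in> \<Omega>"
    define t where "t = hs \<Omega> \<theta> - z \<bullet> \<theta>"
    have "t > 0" using hs_lt[OF assms z] t_def by simp
    moreover have "(z + t *\<^sub>R \<theta>) \<bullet> \<theta> = hs \<Omega> \<theta>" using tt by (simp add: inner_add_left t_def)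
    ultimately show "z \<in> {y - t *\<^sub>R \<theta> | y t. t > 0 \<and> y \<in> {y. y \<bullet> \<theta> = hs \<Omega> \<theta>}}"
      by (intro CollectI exI[of _ "z + t *\<^sub>R \<theta>"] exI[of _ t]) auto
  qed
  ultimately show "(\<exists>c. {y. y \<bullet> \<theta> = hs \<Omega> \<theta>} = {y. y \<bullet> \<theta> = c}) \<and> {y. y \<bullet> \<theta> = hs \<Omega> \<theta>} \<inter> frontier \<Omega> \<noteq> {} \<and>
      \<Omega> \<subseteq> {y - t *\<^sub>R \<theta> | y t. t > 0 \<and> y \<in> {y. y \<bullet> \<theta> = hs \<Omega> \<theta>}}"
    using p by (intro conjI) blast+
next
  fix L assume L: "(\<exists>c. L = {y. y \<bullet> \<theta> = c}) \<and> L \<inter> frontier \<Omega> \<noteq> {} \<and>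
      \<Omega> \<subseteq> {y - t *\<^sub>R \<theta> | y t. t > 0 \<and> y \<in> L}"
  have tt: "\<theta> \<bullet> \<theta> = 1" using assms by (simp add: norm_eq_1)
  then obtain c where c: "L = {y. y \<bullet> \<theta> = c}" using L by blast
  obtain q where q: "q \<in> L" "q \<in> frontier \<Omega>" using L by blast
  have "q \<in> closure \<Omega>" using q frontier_eq by blast
  hence c1: "c \<le> hs \<Omega> \<theta>" using hs_ge[of q \<theta>] q(1) c by simp
  have lt: "\<forall>z\<in>\<Omega>. z \<bullet> \<theta> \<le> c"
  proof
    fix z assume "z \<in> \<Omega>"
    then obtain y t where "z = y - t *\<^sub>R \<theta>" "t > 0" "y \<in> L" using L by blast
    thus "z \<bullet> \<theta> \<le> c" using c tt by (simp add: inner_diff_left)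
  qed
  have cl: "closed {z. z \<bullet> \<theta> \<le> c}" by (intro closed_Collect_le continuous_intros)
  have "closure \<Omega> \<subseteq> {z. z \<bullet> \<theta> \<le> c}"
    using lt by (intro closure_minimal[OF _ cl]) auto
  moreover obtain p where "p \<in> closure \<Omega>" "p \<bullet> \<theta> = hs \<Omega> \<theta>" using hs_attained by blast
  ultimately have "hs \<Omega> \<theta> \<le> c" by auto
  with c1 c show "L = {y. y \<bullet> \<theta> = hs \<Omega> \<theta>}" by simp
qed

lemma lminus_eq: "lminus \<Omega> \<theta> = lplus \<Omega> (-\<theta>)"
proof -
  have "\<And>L. (\<exists>c. L = {y. y \<bullet> \<theta> = c}) = (\<exists>c. L = {y. y \<bullet> (-\<theta>) = c})"
  proof
    fix L assume "\<exists>c. L = {y. y \<bullet> \<theta> = c}"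
    then obtain c where "L = {y. y \<bullet> \<theta> = c}" by blast
    thus "\<exists>c. L = {y. y \<bullet> (-\<theta>) = c}" by (intro exI[of _ "-c"]) auto
  next
    fix L assume "\<exists>c. L = {y. y \<bullet> (-\<theta>) = c}"
    then obtain c where "L = {y. y \<bullet> (-\<theta>) = c}" by blast
    thus "\<exists>c. L = {y. y \<bullet> \<theta> = c}" by (intro exI[of _ "-c"]) auto
  qed
  moreover have "\<And>L. {y + t *\<^sub>R \<theta> | y t. t > 0 \<and> y \<in> L} = {y - t *\<^sub>R (-\<theta>) | y t. t > 0 \<and> y \<in> L}"
    by simp
  ultimately show ?thesis unfolding lminus_def lplus_def by simp
qed

lemma Cminus_eq: "Cminus \<Omega> \<theta> \<delta> = Cplus \<Omega> (-\<theta>) \<delta>"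
  unfolding Cminus_def Cplus_def lminus_eq ..

lemma Cplus_closed: "closed (Cplus \<Omega> \<theta> \<delta>)"
proof -
  have "Cplus \<Omega> \<theta> \<delta> = frontier \<Omega> \<inter> {y. infdist y (lplus \<Omega> \<theta>) \<le> \<delta>}" unfolding Cplus_def by auto
  moreover have "closed {y. infdist y (lplus \<Omega> \<theta>) \<le> \<delta>}"
    by (intro closed_Collect_le continuous_intros)
  ultimately show ?thesis by (simp add: closed_Int frontier_closed)
qed

lemma Cplus_mono: "\<delta> \<le> \<delta>' \<Longrightarrow> Cplus \<Omega> \<theta> \<delta> \<subseteq> Cplus \<Omega> \<theta> \<delta>'"
  unfolding Cplus_def by auto

lemma Cplus_sub: "Cplus \<Omega> \<theta> \<delta> \<subseteq> frontier \<Omega>"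
  unfolding Cplus_def by auto

lemma Cplus_prop: assumes "norm \<theta> = 1" "y \<in> Cplus \<Omega> \<theta> \<delta>"
  shows "y \<in> closure \<Omega>" "hs \<Omega> \<theta> - \<delta> \<le> y \<bullet> \<theta>" "y \<bullet> \<theta> \<le> hs \<Omega> \<theta>"
proof -
  show yc: "y \<in> closure \<Omega>" using assms(2) Cplus_sub frontier_eq by blast
  show "y \<bullet> \<theta> \<le> hs \<Omega> \<theta>" using hs_ge[OF yc] .
  have ne2: "lplus \<Omega> \<theta> \<noteq> {}"
  proof -
    have "hs \<Omega> \<theta> *\<^sub>R \<theta> \<in> lplus \<Omega> \<theta>" using assms(1) by (simp add: lplus_eq[OF assms(1)] norm_eq_1)
    thus ?thesis by blast
  qed
  have "hs \<Omega> \<theta> - y \<bullet> \<theta> \<le> infdist y (lplus \<Omega> \<theta>)"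
    unfolding infdist_notempty[OF ne2]
  proof (rule cINF_greatest[OF ne2])
    fix w assume "w \<in> lplus \<Omega> \<theta>"
    hence w: "w \<bullet> \<theta> = hs \<Omega> \<theta>" using lplus_eq[OF assms(1)] by blast
    have "\<bar>(w - y) \<bullet> \<theta>\<bar> \<le> norm (w - y) * norm \<theta>" by (rule Cauchy_Schwarz_ineq2)
    thus "hs \<Omega> \<theta> - y \<bullet> \<theta> \<le> dist y w" using w assms(1) by (simp add: inner_diff_left dist_norm norm_minus_commute)
  qed
  moreover have "infdist y (lplus \<Omega> \<theta>) \<le> \<delta>" using assms(2) unfolding Cplus_def by blast
  ultimately show "hs \<Omega> \<theta> - \<delta> \<le> y \<bullet> \<theta>" by simp
qed

end

lemma hausdorff1_lip_bound:
  fixes f :: "real \<Rightarrow> pt"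
  assumes ab: "a < b" and L: "L \<ge> 0"
    and lip: "\<And>s s'. s \<in> {a..b} \<Longrightarrow> s' \<in> {a..b} \<Longrightarrow> norm (f s - f s') \<le> L * \<bar>s - s'\<bar>"
    and F: "F \<subseteq> f ` {a..b}"
  shows "hausdorff1 F \<le> ennreal (L * (b - a))"
  unfolding hausdorff1_def
proof (rule SUP_least)
  fix d :: real assume "d \<in> {0<..}"
  hence d: "d > 0" by simp
  define N :: nat where "N = nat \<lceil>L * (b - a) / d\<rceil> + 1"
  have N0: "N > 0" unfolding N_def by simp
  have "L * (b - a) / d \<le> real (nat \<lceil>L * (b - a) / d\<rceil>)" by linarith
  hence "L * (b - a) / d \<le> real N" unfolding N_def by simp
  hence LN: "L * (b - a) / N \<le> d" using d N0 by (simp add: field_simps)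
  define h where "h = (b - a) / N"
  have h0: "h > 0" using ab N0 unfolding h_def by simp
  define C where "C i = (if i < N then f ` {a + real i * h .. a + real (Suc i) * h} else {})" for i
  have sub: "{a + real i * h .. a + real (Suc i) * h} \<subseteq> {a..b}" if "i < N" for i
  proof -
    have "real (Suc i) * h \<le> real N * h" using that h0 by (intro mult_right_mono) auto
    also have "\<dots> = b - a" unfolding h_def using N0 by simp
    finally show ?thesis using h0 by auto
  qed
  have cov: "F \<subseteq> (\<Union>i. C i)"
  proof
    fix x assume "x \<in> F"
    then obtain s where s: "s \<in> {a..b}" "x = f s" using F by blast
    define i where "i = nat \<lfloor>(s - a) / h\<rfloor>"
    have fl0: "\<lfloor>(s - a) / h\<rfloor> \<ge> 0" using s h0 by simp
    have i1: "real i * h \<le> s - a"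
    proof -
      have "real i = of_int \<lfloor>(s - a) / h\<rfloor>" unfolding i_def using fl0 by simp
      also have "\<dots> \<le> (s - a) / h" by simp
      finally show ?thesis using h0 by (simp add: field_simps)
    qed
    have i2: "s - a < real (Suc i) * h"
    proof -
      have "(s - a) / h < of_int \<lfloor>(s - a) / h\<rfloor> + 1" by linarith
      also have "of_int \<lfloor>(s - a) / h\<rfloor> = real i" unfolding i_def using fl0 by simp
      finally show ?thesis using h0 by (simp add: field_simps)
    qed
    show "x \<in> (\<Union>i. C i)"
    proof (cases "i < N")
      case True
      thus ?thesis using i1 i2 s unfolding C_def by (intro UN_I[of i]) auto
    next
      case False
      hence "real N * h \<le> real i * h" using h0 by (intro mult_right_mono) auto
      hence "b - a \<le> s - a" using i1 unfolding h_def using N0 by simp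
      hence sb: "s = b" using s by simp
      have "real (N - 1) * h = b - a - h" unfolding h_def using N0 by (simp add: of_nat_diff field_simps)
      moreover have "real (Suc (N - 1)) * h = b - a" unfolding h_def using N0 by simp
      ultimately show ?thesis using sb s h0 N0 unfolding C_def by (intro UN_I[of "N - 1"]) auto
    qed
  qed
  have bd: "bounded (C i) \<and> diameter (C i) \<le> L * h" for i
  proof (cases "i < N")
    case True
    let ?I = "{a + real i * h .. a + real (Suc i) * h}"
    have lip2: "norm (f s - f s') \<le> L * h" if "s \<in> ?I" "s' \<in> ?I" for s s'
    proof -
      have "norm (f s - f s') \<le> L * \<bar>s - s'\<bar>" using lip sub[OF True] that by blast
      also have "\<dots> \<le> L * h" using that L by (intro mult_left_mono) (auto simp: algebra_simps)
      finally show ?thesis .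
    qed
    have "C i \<subseteq> cball (f (a + real i * h)) (L * h)"
      using lip2 h0 True unfolding C_def by (auto simp: dist_norm)
    hence "bounded (C i)" using bounded_cball bounded_subset by blast
    moreover have "diameter (C i) \<le> L * h"
      using True lip2 L h0 unfolding C_def by (intro diameter_le) auto
    ultimately show ?thesis by blast
  next
    case False thus ?thesis unfolding C_def using L h0 by simp
  qed
  have "(INF C\<in>{C :: nat \<Rightarrow> pt set. F \<subseteq> (\<Union>i. C i) \<and> (\<forall>i. bounded (C i) \<and> diameter (C i) \<le> d)}.
        (\<Sum>i. ennreal (diameter (C i)))) \<le> (\<Sum>i. ennreal (diameter (C i)))"
    using cov bd LN unfolding h_def by (intro INF_lower) (auto intro: order_trans)
  also have "\<dots> = (\<Sum>i<N. ennreal (diameter (C i)))"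
    by (rule suminf_finite) (auto simp: C_def)
  also have "\<dots> \<le> (\<Sum>i<N. ennreal (L * h))"
    using bd by (intro sum_mono ennreal_leI) auto
  also have "\<dots> = ennreal (L * (b - a))"
  proof -
    have "(\<Sum>i<N. ennreal (L * h)) = of_nat N * ennreal (L * h)" by simp
    also have "\<dots> = ennreal (real N * (L * h))"
      using L h0 by (simp add: ennreal_of_nat_eq_real_of_nat ennreal_mult)
    also have "real N * (L * h) = L * (b - a)" unfolding h_def using N0 by simp
    finally show ?thesis .
  qed
  finally show "(INF C\<in>{C :: nat \<Rightarrow> pt set. F \<subseteq> (\<Union>i. C i) \<and> (\<forall>i. bounded (C i) \<and> diameter (C i) \<le> d)}.
        (\<Sum>i. ennreal (diameter (C i)))) \<le> ennreal (L * (b - a))" .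
qed

definition gam :: "real \<Rightarrow> real \<Rightarrow> pt" where
  "gam R s = vector [R * cos s, R * sin s]"

lemma gam_lip: assumes "R \<ge> 0" shows "norm (gam R s - gam R s') \<le> (2 * R) * \<bar>s - s'\<bar>"
proof -
  have c: "\<bar>cos s - cos s'\<bar> \<le> \<bar>s - s'\<bar>"
  proof -
    have "\<bar>cos s - cos s'\<bar> = 2 * \<bar>sin ((s + s') / 2)\<bar> * \<bar>sin ((s' - s) / 2)\<bar>"
      by (simp add: cos_diff_cos abs_mult)
    also have "\<dots> \<le> 2 * 1 * \<bar>(s' - s) / 2\<bar>"
      by (intro mult_mono abs_sin_x_le_abs_x) auto
    finally show ?thesis by simp
  qed
  have sn: "\<bar>sin s - sin s'\<bar> \<le> \<bar>s - s'\<bar>"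
  proof -
    have "\<bar>sin s - sin s'\<bar> = 2 * \<bar>sin ((s - s') / 2)\<bar> * \<bar>cos ((s + s') / 2)\<bar>"
      by (simp add: sin_diff_sin abs_mult)
    also have "\<dots> \<le> 2 * \<bar>(s - s') / 2\<bar> * 1"
      by (intro mult_mono abs_sin_x_le_abs_x) auto
    finally show ?thesis by simp
  qed
  have "norm (gam R s - gam R s') \<le> (\<Sum>i\<in>UNIV. \<bar>(gam R s - gam R s') $ i\<bar>)" by (rule norm_le_l1_cart)
  also have "\<dots> = R * \<bar>cos s - cos s'\<bar> + R * \<bar>sin s - sin s'\<bar>"
    using assms by (simp add: sum_2 gam_def right_diff_distrib[symmetric] abs_mult)
  also have "\<dots> \<le> R * \<bar>s - s'\<bar> + R * \<bar>s - s'\<bar>"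
    using assms c sn by (intro add_mono mult_left_mono) auto
  finally show ?thesis by simp
qed

lemma norm_sq_add: "norm ((a::pt) + b)^2 = a \<bullet> a + 2 * (a \<bullet> b) + b \<bullet> b"
  unfolding power2_norm_eq_inner by (simp add: inner_add_left inner_add_right inner_commute)

context dom begin

lemma bound_D: obtains D where "D \<ge> 0" "\<And>z. z \<in> closure \<Omega> \<Longrightarrow> norm z \<le> D"
proof -
  obtain D where "\<And>z. z \<in> closure \<Omega> \<Longrightarrow> norm z \<le> D" using compact_imp_bounded[OF cp] bounded_iff by blast
  moreover have "0 \<le> D" using calculation[of 0] z closure_subset by auto
  ultimately show ?thesis by (intro that[of D]) auto
qed

lemma frontier_cover:
  obtains R where "R > 0" "frontier \<Omega> \<subseteq> (\<lambda>s. closest_point (closure \<Omega>) (gam R s)) ` {0..2*pi}"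
proof -
  obtain D where D: "D \<ge> 0" "\<And>z. z \<in> closure \<Omega> \<Longrightarrow> norm z \<le> D" using bound_D by blast
  define R where "R = D + 1"
  have R0: "R > 0" using D R_def by simp
  have "frontier \<Omega> \<subseteq> (\<lambda>s. closest_point (closure \<Omega>) (gam R s)) ` {0..2*pi}"
  proof
    fix y assume yf: "y \<in> frontier \<Omega>"
    hence yc: "y \<in> closure \<Omega>" and yn: "y \<notin> rel_interior \<Omega>" using frontier_eq rel_interior_open[OF op] by auto
    obtain a where a: "a \<noteq> 0" "\<And>z. z \<in> closure \<Omega> \<Longrightarrow> a \<bullet> y \<le> a \<bullet> z"
        "\<And>z. z \<in> rel_interior \<Omega> \<Longrightarrow> a \<bullet> y < a \<bullet> z"
      by (rule supporting_hyperplane_relative_frontier[OF cv yc yn], blast)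
    define u where "u = - (1 / norm a) *\<^sub>R a"
    have un: "norm u = 1" using a unfolding u_def by simp
    have uz: "u \<bullet> z \<le> u \<bullet> y" if "z \<in> closure \<Omega>" for z
    proof -
      have "a \<bullet> y / norm a \<le> a \<bullet> z / norm a" using a(2)[OF that] by (simp add: divide_right_mono)
      thus ?thesis unfolding u_def by simp
    qed
    define g where "g t = norm (y + t *\<^sub>R u)" for t
    have g0: "g 0 \<le> R" using D(2)[OF yc] R_def g_def by simp
    have "2 * R = norm ((2*R) *\<^sub>R u)" using un R0 by simp
    also have "\<dots> = norm ((y + (2*R) *\<^sub>R u) - y)" by simp
    also have "\<dots> \<le> norm (y + (2*R) *\<^sub>R u) + norm y" by (rule norm_triangle_ineq4)
    finally have g1: "R \<le> g (2*R)" using D(2)[OF yc] R_def g_def by simp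
    have "continuous_on {0..2*R} g" unfolding g_def by (intro continuous_intros)
    then obtain t where t: "0 \<le> t" "t \<le> 2*R" "g t = R" using IVT'[of g 0 R "2*R"] g0 g1 R0 by auto
    define w where "w = y + t *\<^sub>R u"
    have wn: "norm w = R" using t g_def w_def by simp
    have cl: "y = closest_point (closure \<Omega>) w"
    proof (rule closest_point_unique)
      show "convex (closure \<Omega>)" using cv by (rule convex_closure)
      show "closed (closure \<Omega>)" by simp
      show "y \<in> closure \<Omega>" by (rule yc)
      show "\<forall>z\<in>closure \<Omega>. dist w y \<le> dist w z"
      proof
        fix z assume zc: "z \<in> closure \<Omega>"
        have e: "w - z = (w - y) + (y - z)" by simp
        have "(w - y) \<bullet> (y - z) = t * (u \<bullet> y - u \<bullet> z)" unfolding w_def by (simp add: inner_diff_right right_diff_distrib)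
        moreover have "t * (u \<bullet> y - u \<bullet> z) \<ge> 0" using uz[OF zc] t by (intro mult_nonneg_nonneg) auto
        ultimately have "(dist w y)^2 \<le> (dist w z)^2"
        proof -
          have "(dist w z)^2 = (w - y) \<bullet> (w - y) + 2 * ((w - y) \<bullet> (y - z)) + (y - z) \<bullet> (y - z)"
            using norm_sq_add[of "w - y" "y - z"] by (simp add: dist_norm)
          moreover have "(dist w y)^2 = (w - y) \<bullet> (w - y)" by (simp add: dist_norm power2_norm_eq_inner)
          moreover have "(y - z) \<bullet> (y - z) \<ge> 0" by simp
          ultimately show ?thesis using \<open>(w - y) \<bullet> (y - z) = t * (u \<bullet> y - u \<bullet> z)\<close> \<open>t * (u \<bullet> y - u \<bullet> z) \<ge> 0\<close> by linarith
        qed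
        thus "dist w y \<le> dist w z" by (rule power2_le_imp_le) simp
      qed
    qed
    have "(w$1 / R)^2 + (w$2 / R)^2 = 1"
    proof -
      have "(w$1 / R)^2 + (w$2 / R)^2 = ((w$1)^2 + (w$2)^2) / R^2" by (simp add: power_divide add_divide_distrib)
      also have "(w$1)^2 + (w$2)^2 = R^2" using wn norm2_sq[of w] by simp
      also have "R^2 / R^2 = 1" using R0 by simp
      finally show ?thesis .
    qed
    then obtain s where s: "0 \<le> s" "s < 2*pi" "w$1 / R = cos s" "w$2 / R = sin s" by (rule sincos_total_2pi)
    have "w = gam R s" using s R0 unfolding gam_def by (simp add: vec_eq_iff forall_2 field_simps)
    hence "y = closest_point (closure \<Omega>) (gam R s)" using cl by simp
    moreover have "s \<in> {0..2*pi}" using s by simp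
    ultimately show "y \<in> (\<lambda>s. closest_point (closure \<Omega>) (gam R s)) ` {0..2*pi}" by (rule image_eqI)
  qed
  thus ?thesis by (rule that[OF R0])
qed

lemma hausdorff_frontier_finite: "hausdorff1 (frontier \<Omega>) < \<infinity>"
proof -
  obtain R where R: "R > 0" "frontier \<Omega> \<subseteq> (\<lambda>s. closest_point (closure \<Omega>) (gam R s)) ` {0..2*pi}"
    using frontier_cover by blast
  have "hausdorff1 (frontier \<Omega>) \<le> ennreal ((2*R) * (2*pi - 0))"
  proof (rule hausdorff1_lip_bound[OF _ _ _ R(2)])
    fix s s' :: real
    have "norm (closest_point (closure \<Omega>) (gam R s) - closest_point (closure \<Omega>) (gam R s'))
         \<le> dist (gam R s) (gam R s')"
      using closest_point_lipschitz[of "closure \<Omega>"] cv ne by (simp add: convex_closure dist_norm)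
    also have "\<dots> \<le> (2 * R) * \<bar>s - s'\<bar>" using gam_lip R(1) by (simp add: dist_norm)
    finally show "norm (closest_point (closure \<Omega>) (gam R s) - closest_point (closure \<Omega>) (gam R s')) \<le> (2 * R) * \<bar>s - s'\<bar>" .
  qed (use R in auto)
  moreover have "ennreal ((2*R) * (2*pi - 0)) < \<infinity>" by simp
  ultimately show ?thesis by (rule le_less_trans)
qed

end

lemma sig_borel: "sigma_sets (UNIV::pt set) (sets borel) = sets borel"
  using sets.sigma_sets_eq[of "borel :: pt measure"] by simp

lemma arc_sets: "sets (arclength \<Omega>) = sets borel"
  unfolding arclength_def by (simp add: sets_measure_of_conv sig_borel)

lemma arc_space: "space (arclength \<Omega>) = UNIV"
  unfolding arclength_def by (simp add: space_measure_of_conv)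

lemma arc_emeasure:
  "emeasure (arclength \<Omega>) A = (if A \<in> sets borel \<and> measure_space UNIV (sets borel) (\<lambda>A. hausdorff1 (A \<inter> frontier \<Omega>))
     then hausdorff1 (A \<inter> frontier \<Omega>) else 0)"
  unfolding arclength_def by (simp add: emeasure_measure_of_conv sig_borel)

lemma arc_measurable_cong: "f \<in> borel_measurable borel \<Longrightarrow> f \<in> borel_measurable (arclength \<Omega>)"
  using measurable_cong_sets[OF arc_sets refl] by blast

context dom begin

lemma arc_finite: "finite_measure (arclength \<Omega>)"
proof
  have "emeasure (arclength \<Omega>) (space (arclength \<Omega>)) \<le> hausdorff1 (frontier \<Omega>)"
    unfolding arc_space arc_emeasure by simp
  thus "emeasure (arclength \<Omega>) (space (arclength \<Omega>)) \<noteq> \<infinity>"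
    using hausdorff_frontier_finite by (simp add: top.not_eq_extremum le_less_trans)
qed

end

definition Reg :: "pt \<Rightarrow> real \<Rightarrow> real \<Rightarrow> real \<Rightarrow> pt set" where
  "Reg \<theta> a b c = {x. a \<le> x \<bullet> \<theta> \<and> x \<bullet> \<theta> \<le> b \<and> \<bar>x \<bullet> perp \<theta>\<bar> \<le> c}"

definition rot :: "pt \<Rightarrow> pt \<Rightarrow> pt" where
  "rot \<theta> p = p$1 *\<^sub>R \<theta> + p$2 *\<^sub>R perp \<theta>"

lemma rot_inner:
  assumes "norm \<theta> = 1"
  shows "rot \<theta> p \<bullet> \<theta> = p$1" "rot \<theta> p \<bullet> perp \<theta> = p$2"
proof -
  have t: "\<theta> \<bullet> \<theta> = 1" using assms by (simp add: norm_eq_1)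
  have pp: "perp \<theta> \<bullet> perp \<theta> = 1" using perp_perp_inner[OF assms] .
  have tp: "\<theta> \<bullet> perp \<theta> = 0" "perp \<theta> \<bullet> \<theta> = 0" using perp_inner[of \<theta>] by (auto simp: inner_commute)
  show "rot \<theta> p \<bullet> \<theta> = p$1" "rot \<theta> p \<bullet> perp \<theta> = p$2"
    unfolding rot_def using t pp tp by (simp_all add: inner_add_left)
qed

lemma rot_orth: assumes "norm \<theta> = 1" shows "orthogonal_transformation (rot \<theta>)"
  unfolding orthogonal_transformation_def
proof
  show "linear (rot \<theta>)" unfolding rot_def
    by (rule linearI) (simp_all add: algebra_simps)
  show "\<forall>v w. rot \<theta> v \<bullet> rot \<theta> w = v \<bullet> w"
  proof (intro allI)
    fix v w
    have "rot \<theta> v \<bullet> rot \<theta> w = w$1 * (rot \<theta> v \<bullet> \<theta>) + w$2 * (rot \<theta> v \<bullet> perp \<theta>)"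
      unfolding rot_def[of \<theta> w] by (simp add: inner_add_right)
    also have "\<dots> = v \<bullet> w" using rot_inner[OF assms, of v] by (simp add: inner2 mult.commute)
    finally show "rot \<theta> v \<bullet> rot \<theta> w = v \<bullet> w" .
  qed
qed

lemma mem_cbox2: "(p::pt) \<in> cbox a b \<longleftrightarrow> a$1 \<le> p$1 \<and> p$1 \<le> b$1 \<and> a$2 \<le> p$2 \<and> p$2 \<le> b$2"
  unfolding interval_cbox_cart[symmetric] by (auto simp: less_eq_vec_def forall_2)

lemma mem_cbox_vec: "(vector [x, y]::pt) \<in> cbox (vector [a1, a2]) (vector [b1, b2]) \<longleftrightarrow> a1 \<le> x \<and> x \<le> b1 \<and> a2 \<le> y \<and> y \<le> b2"
  by (subst mem_cbox2) simp

lemma Reg_img: assumes "norm \<theta> = 1"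
  shows "Reg \<theta> a b c = rot \<theta> ` cbox (vector [a, -c]) (vector [b, c])"
proof
  show "Reg \<theta> a b c \<subseteq> rot \<theta> ` cbox (vector [a, -c]) (vector [b, c])"
  proof
    fix x assume x: "x \<in> Reg \<theta> a b c"
    have "x = rot \<theta> (vector [x \<bullet> \<theta>, x \<bullet> perp \<theta>])" unfolding rot_def using decomp[OF assms, of x] by simp
    moreover have "(vector [x \<bullet> \<theta>, x \<bullet> perp \<theta>] :: pt) \<in> cbox (vector [a, -c]) (vector [b, c])"
      using x unfolding Reg_def mem_cbox_vec by auto
    ultimately show "x \<in> rot \<theta> ` cbox (vector [a, -c]) (vector [b, c])" by (rule image_eqI)
  qed
  show "rot \<theta> ` cbox (vector [a, -c]) (vector [b, c]) \<subseteq> Reg \<theta> a b c"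
    using rot_inner[OF assms] unfolding Reg_def by (auto simp: mem_cbox2)
qed

lemma Reg_measure: assumes "norm \<theta> = 1" "a \<le> b" "0 \<le> c"
  shows "Reg \<theta> a b c \<in> lmeasurable" "measure lebesgue (Reg \<theta> a b c) = (b - a) * (2 * c)"
proof -
  let ?B = "cbox (vector [a, -c]) (vector [b, c]) :: pt set"
  show "Reg \<theta> a b c \<in> lmeasurable" unfolding Reg_img[OF assms(1)]
    by (rule measurable_orthogonal_image[OF rot_orth[OF assms(1)]]) simp
  have "vector [a, c] \<in> ?B" using assms by (subst mem_cbox2) auto
  hence ne: "?B \<noteq> {}" by blast
  have "measure lebesgue (Reg \<theta> a b c) = measure lebesgue ?B" unfolding Reg_img[OF assms(1)]
    by (rule measure_orthogonal_image[OF rot_orth[OF assms(1)]]) simp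
  also have "\<dots> = measure lborel ?B" by simp
  also have "\<dots> = (b - a) * (2 * c)" using content_cbox_cart[OF ne, folded measure_def] by (simp add: UNIV_2 algebra_simps)
  finally show "measure lebesgue (Reg \<theta> a b c) = (b - a) * (2 * c)" .
qed

lemma Reg_emeasure: assumes "norm \<theta> = 1" "a \<le> b" "0 \<le> c"
  shows "emeasure lebesgue (Reg \<theta> a b c) = ennreal ((b - a) * (2 * c))"
  using Reg_measure[OF assms] by (simp add: emeasure_eq_measure2)

lemma Reg_borel: "Reg \<theta> a b c \<in> sets lebesgue"
proof -
  have "closed (Reg \<theta> a b c)" unfolding Reg_def
    by (intro closed_Collect_conj closed_Collect_le continuous_intros)
  thus ?thesis by (simp add: borel_closed)
qed

definition psi :: "real \<Rightarrow> real" where "psi s = max 0 (min 1 (2 - \<bar>s\<bar>))"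

definition tf :: "pt \<Rightarrow> real \<Rightarrow> real \<Rightarrow> pt \<Rightarrow> real" where
  "tf \<theta> t W z = psi ((z \<bullet> \<theta>) / t) * psi ((z \<bullet> perp \<theta>) / W)"

lemma psi_range: "0 \<le> psi s" "psi s \<le> 1" unfolding psi_def by auto

lemma tf_range: "0 \<le> tf \<theta> t W z" "tf \<theta> t W z \<le> 1"
  unfolding tf_def using psi_range by (auto intro: mult_le_one)

lemma tf_cont: "continuous_on UNIV (tf \<theta> t W)"
  unfolding tf_def psi_def divide_inverse by (intro continuous_intros)

lemma tf_one: assumes "t > 0" "W > 0" "\<bar>z \<bullet> \<theta>\<bar> \<le> t" "\<bar>z \<bullet> perp \<theta>\<bar> \<le> W"
  shows "tf \<theta> t W z = 1"
proof -
  have "\<bar>(z \<bullet> \<theta>) / t\<bar> \<le> 1" "\<bar>(z \<bullet> perp \<theta>) / W\<bar> \<le> 1" using assms by (auto simp: abs_divide)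
  thus ?thesis unfolding tf_def psi_def by simp
qed

lemma tf_zero: assumes "t > 0" "W > 0" "z \<notin> Reg \<theta> (-2*t) (2*t) (2*W)"
  shows "tf \<theta> t W z = 0"
proof -
  have "\<bar>z \<bullet> \<theta>\<bar> > 2*t \<or> \<bar>z \<bullet> perp \<theta>\<bar> > 2*W" using assms(3) unfolding Reg_def by auto
  hence "\<bar>(z \<bullet> \<theta>) / t\<bar> \<ge> 2 \<or> \<bar>(z \<bullet> perp \<theta>) / W\<bar> \<ge> 2" using assms(1,2) by (auto simp: abs_divide field_simps)
  thus ?thesis unfolding tf_def psi_def by auto
qed

lemma Reg_bounded: assumes "norm \<theta> = 1" shows "bounded (Reg \<theta> a b c)"
proof -
  have "norm x \<le> max \<bar>a\<bar> \<bar>b\<bar> + c" if "x \<in> Reg \<theta> a b c" for x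
  proof -
    have "norm x = norm ((x \<bullet> \<theta>) *\<^sub>R \<theta> + (x \<bullet> perp \<theta>) *\<^sub>R perp \<theta>)" using decomp[OF assms, of x] by simp
    also have "\<dots> \<le> norm ((x \<bullet> \<theta>) *\<^sub>R \<theta>) + norm ((x \<bullet> perp \<theta>) *\<^sub>R perp \<theta>)" by (rule norm_triangle_ineq)
    also have "\<dots> = \<bar>x \<bullet> \<theta>\<bar> + \<bar>x \<bullet> perp \<theta>\<bar>" using assms perp_norm[of \<theta>] by simp
    also have "\<dots> \<le> max \<bar>a\<bar> \<bar>b\<bar> + c" using that unfolding Reg_def by auto
    finally show ?thesis .
  qed
  thus ?thesis unfolding bounded_iff by blast
qed

lemma tf_Cc: assumes "norm \<theta> = 1" "t > 0" "W > 0" shows "Cc (tf \<theta> t W)"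
proof -
  have "{x. tf \<theta> t W x \<noteq> 0} \<subseteq> Reg \<theta> (-2*t) (2*t) (2*W)" using tf_zero[OF assms(2,3)] by blast
  hence "bounded {x. tf \<theta> t W x \<noteq> 0}" using Reg_bounded[OF assms(1)] bounded_subset by blast
  thus ?thesis unfolding Cc_def using tf_cont compact_closure by blast
qed

lemma enn_powr_ennreal: "0 \<le> a \<Longrightarrow> enn_powr q (ennreal a) = ennreal (a powr q)"
  unfolding enn_powr_def by simp

lemma tf_norm_bounds:
  assumes "norm \<theta> = 1" "t > 0" "W > 0" "q > 0"
  shows "ennreal (4 * t * W) \<le> (\<integral>\<^sup>+ x. enn_powr q (ennreal \<bar>tf \<theta> t W x\<bar>) \<partial>lborel)"
    "(\<integral>\<^sup>+ x. enn_powr q (ennreal \<bar>tf \<theta> t W x\<bar>) \<partial>lborel) \<le> ennreal (16 * t * W)"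
proof -
  have eq: "enn_powr q (ennreal \<bar>tf \<theta> t W x\<bar>) = ennreal (tf \<theta> t W x powr q)" for x
    using tf_range[of \<theta> t W x] by (simp add: enn_powr_ennreal)
  have lo: "indicator (Reg \<theta> (-t) t W) x \<le> ennreal (tf \<theta> t W x powr q)" for x
  proof (cases "x \<in> Reg \<theta> (-t) t W")
    case True
    hence "tf \<theta> t W x = 1" using assms by (intro tf_one) (auto simp: Reg_def)
    thus ?thesis using True by simp
  qed simp
  have hi: "ennreal (tf \<theta> t W x powr q) \<le> indicator (Reg \<theta> (-2*t) (2*t) (2*W)) x" for x
  proof (cases "x \<in> Reg \<theta> (-2*t) (2*t) (2*W)")
    case True
    have "tf \<theta> t W x powr q \<le> 1" using tf_range[of \<theta> t W x] assms(4) by (intro powr_le1) auto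
    thus ?thesis using True by simp
  next
    case False
    thus ?thesis using tf_zero[OF assms(2,3) False] by simp
  qed
  have "ennreal (4 * t * W) = emeasure lebesgue (Reg \<theta> (-t) t W)"
    using Reg_emeasure[OF assms(1), of "-t" t W] assms by (simp add: algebra_simps)
  also have "\<dots> = (\<integral>\<^sup>+ x. indicator (Reg \<theta> (-t) t W) x \<partial>lebesgue)" by (simp add: Reg_borel)
  also have "\<dots> \<le> (\<integral>\<^sup>+ x. ennreal (tf \<theta> t W x powr q) \<partial>lebesgue)" by (intro nn_integral_mono lo)
  also have "\<dots> = (\<integral>\<^sup>+ x. enn_powr q (ennreal \<bar>tf \<theta> t W x\<bar>) \<partial>lborel)" by (simp add: eq nn_integral_completion)
  finally show "ennreal (4 * t * W) \<le> (\<integral>\<^sup>+ x. enn_powr q (ennreal \<bar>tf \<theta> t W x\<bar>) \<partial>lborel)" .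
  have "(\<integral>\<^sup>+ x. enn_powr q (ennreal \<bar>tf \<theta> t W x\<bar>) \<partial>lborel) = (\<integral>\<^sup>+ x. ennreal (tf \<theta> t W x powr q) \<partial>lebesgue)"
    by (simp add: eq nn_integral_completion)
  also have "\<dots> \<le> (\<integral>\<^sup>+ x. indicator (Reg \<theta> (-2*t) (2*t) (2*W)) x \<partial>lebesgue)" by (intro nn_integral_mono hi)
  also have "\<dots> = emeasure lebesgue (Reg \<theta> (-2*t) (2*t) (2*W))" by (simp add: Reg_borel)
  also have "\<dots> = ennreal (16 * t * W)"
    using Reg_emeasure[OF assms(1), of "-2*t" "2*t" "2*W"] assms by (simp add: algebra_simps)
  finally show "(\<integral>\<^sup>+ x. enn_powr q (ennreal \<bar>tf \<theta> t W x\<bar>) \<partial>lborel) \<le> ennreal (16 * t * W)" .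
qed

lemma enn_root_mono: assumes "q > 0" "a \<le> b" shows "enn_root q a \<le> enn_root q b"
proof (cases "b = \<infinity>")
  case True thus ?thesis by (simp add: enn_root_def)
next
  case False
  hence "a \<noteq> \<infinity>" using assms(2) by (auto simp: top_unique)
  moreover have "enn2real a \<le> enn2real b" using assms(2) False by (simp add: enn2real_mono top.not_eq_extremum)
  ultimately show ?thesis using False assms(1) unfolding enn_root_def
    by (auto intro!: ennreal_leI powr_mono2)
qed

lemma enn_powr_mono: assumes "q > 0" "a \<le> b" shows "enn_powr q a \<le> enn_powr q b"
proof (cases "b = \<infinity>")
  case True thus ?thesis by (simp add: enn_powr_def)
next
  case False
  hence "a \<noteq> \<infinity>" using assms(2) by (auto simp: top_unique)
  moreover have "enn2real a \<le> enn2real b" using assms(2) False by (simp add: enn2real_mono top.not_eq_extremum)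
  ultimately show ?thesis using False assms(1) unfolding enn_powr_def
    by (auto intro!: ennreal_leI powr_mono2)
qed

lemma enn_root_ennreal: "0 \<le> a \<Longrightarrow> enn_root q (ennreal a) = ennreal (a powr (1/q))"
  unfolding enn_root_def by simp

context dom begin

lemma maxop_lower:
  assumes th: "norm \<theta> = 1" and t: "t > 0" and K: "K > 0" and W: "W > 0"
    and D: "\<And>z. z \<in> closure \<Omega> \<Longrightarrow> norm z \<le> D"
    and WD: "2^j * D \<le> W / 2"
    and x: "x \<in> Reg \<theta> (2^j * hs \<Omega> \<theta> - t) (2^j * hs \<Omega> \<theta>) (W / 2)"
  shows "ennreal (measure (arclength \<Omega>) (Cplus \<Omega> \<theta> (t / 2^j)) / K) \<le> maxop \<Omega> (\<lambda>z. tf \<theta> t W z / K) x"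
proof -
  let ?C = "Cplus \<Omega> \<theta> (t / 2^j)"
  let ?g = "\<lambda>y. tf \<theta> t W (x - (2 powr real_of_int (int j)) *\<^sub>R y) / K"
  interpret fm: finite_measure "arclength \<Omega>" by (rule arc_finite)
  have p2': "2 powr real j = (2::real)^j" by (simp add: powr_realpow)
  have p2: "2 powr real_of_int (int j) = 2^j" by (simp add: powr_realpow)
  have le: "indicator ?C y / K \<le> ?g y" for y
  proof (cases "y \<in> ?C")
    case True
    have yc: "y \<in> closure \<Omega>" "hs \<Omega> \<theta> - t / 2^j \<le> y \<bullet> \<theta>" "y \<bullet> \<theta> \<le> hs \<Omega> \<theta>"
      using Cplus_prop[OF th True] by auto
    have "2^j * (hs \<Omega> \<theta> - t / 2^j) \<le> 2^j * (y \<bullet> \<theta>)" using yc(2) by (intro mult_left_mono) auto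
    hence a1: "2^j * hs \<Omega> \<theta> - t \<le> 2^j * (y \<bullet> \<theta>)" by (simp add: algebra_simps)
    have a2: "2^j * (y \<bullet> \<theta>) \<le> 2^j * hs \<Omega> \<theta>" using yc(3) by (intro mult_left_mono) auto
    have xx: "2^j * hs \<Omega> \<theta> - t \<le> x \<bullet> \<theta>" "x \<bullet> \<theta> \<le> 2^j * hs \<Omega> \<theta>" using x unfolding Reg_def by auto
    have eq1: "(x - 2^j *\<^sub>R y) \<bullet> \<theta> = x \<bullet> \<theta> - 2^j * (y \<bullet> \<theta>)" by (simp add: inner_diff_left)
    have i1: "\<bar>(x - 2^j *\<^sub>R y) \<bullet> \<theta>\<bar> \<le> t" unfolding eq1 abs_le_iff using a1 a2 xx by linarith
    have "\<bar>y \<bullet> perp \<theta>\<bar> \<le> norm y * norm (perp \<theta>)" by (rule Cauchy_Schwarz_ineq2)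
    hence "\<bar>y \<bullet> perp \<theta>\<bar> \<le> D" using D[OF yc(1)] th perp_norm[of \<theta>] by simp
    hence "2^j * \<bar>y \<bullet> perp \<theta>\<bar> \<le> 2^j * D" by (intro mult_left_mono) auto
    hence b1: "\<bar>2^j * (y \<bullet> perp \<theta>)\<bar> \<le> 2^j * D" by (simp add: abs_mult)
    have b2: "\<bar>x \<bullet> perp \<theta>\<bar> \<le> W / 2" using x unfolding Reg_def by auto
    have eq2: "(x - 2^j *\<^sub>R y) \<bullet> perp \<theta> = x \<bullet> perp \<theta> - 2^j * (y \<bullet> perp \<theta>)" by (simp add: inner_diff_left)
    have "\<bar>x \<bullet> perp \<theta> - 2^j * (y \<bullet> perp \<theta>)\<bar> \<le> \<bar>x \<bullet> perp \<theta>\<bar> + \<bar>2^j * (y \<bullet> perp \<theta>)\<bar>" by (rule abs_triangle_ineq4)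
    hence i2: "\<bar>(x - 2^j *\<^sub>R y) \<bullet> perp \<theta>\<bar> \<le> W" unfolding eq2 using b1 b2 WD by linarith
    have "tf \<theta> t W (x - 2^j *\<^sub>R y) = 1" by (rule tf_one[OF t W i1 i2])
    thus ?thesis using True by (simp add: p2 p2')
  next
    case False
    thus ?thesis using tf_range[of \<theta> t W] K by simp
  qed
  have meas: "?g \<in> borel_measurable (arclength \<Omega>)"
  proof (rule arc_measurable_cong, rule borel_measurable_continuous_onI)
    show "continuous_on UNIV ?g"
      by (intro continuous_intros continuous_on_compose2[OF tf_cont]) (use K in auto)
  qed
  have int1: "integrable (arclength \<Omega>) ?g"
  proof (rule fm.integrable_const_bound[where B="1/K"])
    show "AE y in arclength \<Omega>. norm (?g y) \<le> 1 / K"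
      using tf_range[of \<theta> t W] K by (intro AE_I2) (auto simp: divide_right_mono)
  qed (rule meas)
  have Cm: "?C \<in> sets (arclength \<Omega>)" unfolding arc_sets using Cplus_closed by (simp add: borel_closed)
  have int2: "integrable (arclength \<Omega>) (\<lambda>y. indicator ?C y / K :: real)"
    using Cm by (intro integrable_divide_zero integrable_real_indicator) (auto simp: less_top[symmetric] fm.emeasure_finite)
  have "measure (arclength \<Omega>) ?C / K = integral\<^sup>L (arclength \<Omega>) (\<lambda>y. indicator ?C y / K)"
    by (simp add: arc_space)
  also have "\<dots> \<le> integral\<^sup>L (arclength \<Omega>) ?g" by (rule integral_mono[OF int2 int1 le])
  also have "\<dots> \<le> \<bar>integral\<^sup>L (arclength \<Omega>) ?g\<bar>" by (rule abs_ge_self)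
  finally have "ennreal (measure (arclength \<Omega>) ?C / K) \<le> ennreal \<bar>integral\<^sup>L (arclength \<Omega>) ?g\<bar>"
    by (rule ennreal_leI)
  also have "\<dots> \<le> maxop \<Omega> (\<lambda>z. tf \<theta> t W z / K) x" unfolding maxop_def
    by (rule SUP_upper2[of "int j"]) auto
  finally show ?thesis .
qed

end

context dom begin

lemma KL:
  assumes th: "norm \<theta> = 1" and t: "t > 0" and q: "q \<ge> 1" and J: "finite J"
    and disj: "\<And>i j. i \<in> J \<Longrightarrow> j \<in> J \<Longrightarrow> i < j \<Longrightarrow> 2^i * hs \<Omega> \<theta> < 2^j * hs \<Omega> \<theta> - t"
  shows "enn_root q (ennreal ((\<Sum>j\<in>J. measure (arclength \<Omega>) (Cplus \<Omega> \<theta> (t / 2^j)) powr q) / 16))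
     \<le> (SUP f\<in>{f. Cc f \<and> lq_norm q f = 1}. lq_norm_enn q (maxop \<Omega> f))"
proof -
  have q0: "q > 0" using q by simp
  obtain D where D: "D \<ge> 0" "\<And>z. z \<in> closure \<Omega> \<Longrightarrow> norm z \<le> D" using bound_D by blast
  define W where "W = 2 * (\<Sum>j\<in>J. 2^j * D) + 2"
  have S0: "0 \<le> (\<Sum>j\<in>J. 2^j * D)" using D by (intro sum_nonneg) auto
  hence W0: "W > 0" unfolding W_def by simp
  have WD: "2^j * D \<le> W / 2" if "j \<in> J" for j
  proof -
    have "2^j * D \<le> (\<Sum>j\<in>J. 2^j * D)" using J that D by (intro member_le_sum) auto
    thus ?thesis unfolding W_def by simp
  qed
  define N where "N = (\<integral>\<^sup>+ x. enn_powr q (ennreal \<bar>tf \<theta> t W x\<bar>) \<partial>lborel)"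
  have Nb: "ennreal (4 * t * W) \<le> N" "N \<le> ennreal (16 * t * W)"
    using tf_norm_bounds[OF th t W0 q0] unfolding N_def by auto
  define n where "n = enn2real N"
  have Nt: "N < top" by (rule le_less_trans[OF Nb(2)]) simp
  have Nn: "N = ennreal n" unfolding n_def using Nt by simp
  have n0': "0 \<le> n" unfolding n_def by simp
  have tW: "0 < 4 * t * W" using t W0 by simp
  have nb: "4 * t * W \<le> n" "n \<le> 16 * t * W"
    using Nb tW unfolding Nn by (simp_all add: ennreal_le_iff n0')
  have n0: "n > 0" using nb(1) tW by linarith
  define K where "K = n powr (1/q)"
  have K0: "K > 0" unfolding K_def using n0 by simp
  have Kq: "K powr q = n" unfolding K_def using n0 q0 by (simp add: powr_powr)
  define g where "g = (\<lambda>z. tf \<theta> t W z / K)"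
  have tfm: "tf \<theta> t W \<in> borel_measurable borel" by (rule borel_measurable_continuous_onI[OF tf_cont])
  have gCc: "Cc g"
  proof -
    have "{x. g x \<noteq> 0} = {x. tf \<theta> t W x \<noteq> 0}" unfolding g_def using K0 by auto
    moreover have "continuous_on UNIV g" unfolding g_def using K0 by (intro continuous_intros tf_cont) auto
    ultimately show ?thesis using tf_Cc[OF th t W0] unfolding Cc_def by simp
  qed
  have gnorm: "lq_norm q g = 1"
  proof -
    have eq: "enn_powr q (ennreal \<bar>g x\<bar>) = ennreal (tf \<theta> t W x powr q) * ennreal (1 / n)" for x
    proof -
      have "enn_powr q (ennreal \<bar>g x\<bar>) = ennreal ((tf \<theta> t W x / K) powr q)"
        unfolding g_def using tf_range[of \<theta> t W x] K0 by (simp add: enn_powr_ennreal)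
      also have "(tf \<theta> t W x / K) powr q = tf \<theta> t W x powr q * (1 / n)" by (simp add: powr_divide Kq)
      moreover have "ennreal (tf \<theta> t W x powr q * (1 / n)) = ennreal (tf \<theta> t W x powr q) * ennreal (1 / n)"
        using n0 by (intro ennreal_mult) auto
      ultimately show ?thesis by (simp only:)
    qed
    have eq2: "enn_powr q (ennreal \<bar>tf \<theta> t W x\<bar>) = ennreal (tf \<theta> t W x powr q)" for x
      using tf_range[of \<theta> t W x] by (simp add: enn_powr_ennreal)
    have "(\<integral>\<^sup>+ x. enn_powr q (ennreal \<bar>g x\<bar>) \<partial>lborel) = N * ennreal (1 / n)"
      unfolding eq N_def eq2 by (rule nn_integral_multc) (use tfm in measurable)
    also have "\<dots> = 1" unfolding Nn using n0 by (simp add: ennreal_mult[symmetric])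
    finally show ?thesis unfolding lq_norm_def lq_norm_enn_def by (simp add: enn_root_def)
  qed
  define phi where "phi j = measure (arclength \<Omega>) (Cplus \<Omega> \<theta> (t / 2^j))" for j :: nat
  have phi0: "phi j \<ge> 0" for j unfolding phi_def by simp
  define R where "R j = Reg \<theta> (2^j * hs \<Omega> \<theta> - t) (2^j * hs \<Omega> \<theta>) (W / 2)" for j :: nat
  have Rdisj: "i = j" if "i \<in> J" "j \<in> J" "x \<in> R i" "x \<in> R j" for i j x
  proof (rule ccontr)
    assume "i \<noteq> j"
    hence "i < j \<or> j < i" by auto
    thus False
    proof
      assume "i < j"
      from disj[OF that(1,2) this] that(3,4) show False unfolding R_def Reg_def by auto
    next
      assume "j < i"
      from disj[OF that(2,1) this] that(3,4) show False unfolding R_def Reg_def by auto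
    qed
  qed
  have pw: "(\<Sum>j\<in>J. ennreal ((phi j / K) powr q) * indicator (R j) x) \<le> enn_powr q (maxop \<Omega> g x)" for x
  proof (cases "\<exists>j\<in>J. x \<in> R j")
    case False
    hence "(\<Sum>j\<in>J. ennreal ((phi j / K) powr q) * indicator (R j) x) = 0" by (intro sum.neutral) auto
    thus ?thesis by simp
  next
    case True
    then obtain j0 where j0: "j0 \<in> J" "x \<in> R j0" by blast
    have "(\<Sum>j\<in>J. ennreal ((phi j / K) powr q) * indicator (R j) x) = ennreal ((phi j0 / K) powr q) * indicator (R j0) x"
    proof -
      have "(\<Sum>j\<in>J. ennreal ((phi j / K) powr q) * indicator (R j) x) = ennreal ((phi j0 / K) powr q) * indicator (R j0) x
         + (\<Sum>j\<in>J - {j0}. ennreal ((phi j / K) powr q) * indicator (R j) x)" by (rule sum.remove[OF J j0(1)])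
      moreover have "(\<Sum>j\<in>J - {j0}. ennreal ((phi j / K) powr q) * indicator (R j) x) = 0"
      proof (rule sum.neutral, rule ballI)
        fix j assume "j \<in> J - {j0}"
        hence "x \<notin> R j" using Rdisj[of j j0 x] j0 by auto
        thus "ennreal ((phi j / K) powr q) * indicator (R j) x = 0" by simp
      qed
      ultimately show ?thesis by simp
    qed
    also have "\<dots> = enn_powr q (ennreal (phi j0 / K))" using j0 phi0[of j0] K0 by (simp add: enn_powr_ennreal)
    also have "\<dots> \<le> enn_powr q (maxop \<Omega> g x)"
      unfolding g_def phi_def
      by (intro enn_powr_mono[OF q0] maxop_lower[OF th t K0 W0 D(2) WD[OF j0(1)]]) (use j0 R_def in auto)
    finally show ?thesis .
  qed
  have "ennreal ((\<Sum>j\<in>J. phi j powr q) / 16) = (\<Sum>j\<in>J. ennreal (phi j powr q / 16))"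
    by (simp add: sum_divide_distrib)
  also have "\<dots> \<le> (\<Sum>j\<in>J. ennreal ((phi j / K) powr q) * emeasure lebesgue (R j))"
  proof (intro sum_mono)
    fix j assume "j \<in> J"
    have "emeasure lebesgue (R j) = ennreal (t * W)" unfolding R_def
      using Reg_emeasure[OF th, of "2^j * hs \<Omega> \<theta> - t" "2^j * hs \<Omega> \<theta>" "W/2"] t W0 by simp
    moreover have "(phi j / K) powr q = phi j powr q / n" by (simp add: powr_divide Kq)
    moreover have "phi j powr q / 16 \<le> phi j powr q / n * (t * W)"
    proof -
      have "phi j powr q / 16 = phi j powr q * (t * W) / (16 * t * W)" using t W0 by simp
      also have "\<dots> \<le> phi j powr q * (t * W) / n" using nb n0 t W0 by (intro divide_left_mono) auto
      finally show ?thesis by simp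
    qed
    moreover have "ennreal (phi j powr q / n) * ennreal (t * W) = ennreal (phi j powr q / n * (t * W))"
      using n0 t W0 by (intro ennreal_mult[symmetric]) auto
    ultimately show "ennreal (phi j powr q / 16) \<le> ennreal ((phi j / K) powr q) * emeasure lebesgue (R j)"
    proof -
      assume a1: "emeasure lebesgue (R j) = ennreal (t * W)" and a2: "(phi j / K) powr q = phi j powr q / n"
        and a3: "phi j powr q / 16 \<le> phi j powr q / n * (t * W)"
        and a4: "ennreal (phi j powr q / n) * ennreal (t * W) = ennreal (phi j powr q / n * (t * W))"
      have "ennreal (phi j powr q / 16) \<le> ennreal (phi j powr q / n * (t * W))" using a3 by (rule ennreal_leI)
      also have "\<dots> = ennreal ((phi j / K) powr q) * emeasure lebesgue (R j)" unfolding a1 a2 a4 ..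
      finally show ?thesis .
    qed
  qed
  also have "\<dots> = (\<integral>\<^sup>+ x. (\<Sum>j\<in>J. ennreal ((phi j / K) powr q) * indicator (R j) x) \<partial>lebesgue)"
  proof -
    have "(\<integral>\<^sup>+ x. (\<Sum>j\<in>J. ennreal ((phi j / K) powr q) * indicator (R j) x) \<partial>lebesgue)
       = (\<Sum>j\<in>J. (\<integral>\<^sup>+ x. ennreal ((phi j / K) powr q) * indicator (R j) x \<partial>lebesgue))"
    proof (rule nn_integral_sum)
      fix j assume "j \<in> J"
      have "R j \<in> sets lebesgue" unfolding R_def by (rule Reg_borel)
      thus "(\<lambda>x. ennreal ((phi j / K) powr q) * indicator (R j) x) \<in> borel_measurable lebesgue" by measurable
    qed
    also have "\<dots> = (\<Sum>j\<in>J. ennreal ((phi j / K) powr q) * emeasure lebesgue (R j))"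
    proof (rule sum.cong[OF refl])
      fix j assume "j \<in> J"
      have "R j \<in> sets lebesgue" unfolding R_def by (rule Reg_borel)
      thus "(\<integral>\<^sup>+ x. ennreal ((phi j / K) powr q) * indicator (R j) x \<partial>lebesgue) = ennreal ((phi j / K) powr q) * emeasure lebesgue (R j)"
        by (rule nn_integral_cmult_indicator)
    qed
    finally show ?thesis by (rule sym)
  qed
  also have "\<dots> \<le> (\<integral>\<^sup>+ x. enn_powr q (maxop \<Omega> g x) \<partial>lebesgue)" by (intro nn_integral_mono pw)
  also have "\<dots> = (\<integral>\<^sup>+ x. enn_powr q (maxop \<Omega> g x) \<partial>lborel)" by (simp add: nn_integral_completion)
  finally have main: "ennreal ((\<Sum>j\<in>J. phi j powr q) / 16) \<le> (\<integral>\<^sup>+ x. enn_powr q (maxop \<Omega> g x) \<partial>lborel)" .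
  have "enn_root q (ennreal ((\<Sum>j\<in>J. phi j powr q) / 16)) \<le> lq_norm_enn q (maxop \<Omega> g)"
    unfolding lq_norm_enn_def by (rule enn_root_mono[OF q0 main])
  also have "\<dots> \<le> (SUP f\<in>{f. Cc f \<and> lq_norm q f = 1}. lq_norm_enn q (maxop \<Omega> f))"
  proof (rule SUP_upper)
    show "g \<in> {f. Cc f \<and> lq_norm q f = 1}" using gCc gnorm by simp
  qed
  finally show ?thesis unfolding phi_def .
qed

end

context dom begin

definition "phi \<theta> \<delta> = measure (arclength \<Omega>) (Cplus \<Omega> \<theta> \<delta>)"
definition "PP = measure (arclength \<Omega>) UNIV"

lemma phi_nonneg: "0 \<le> phi \<theta> \<delta>" unfolding phi_def by simp

lemma phi_le: "phi \<theta> \<delta> \<le> PP"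
proof -
  interpret fm: finite_measure "arclength \<Omega>" by (rule arc_finite)
  show ?thesis unfolding phi_def PP_def using fm.bounded_measure[of "Cplus \<Omega> \<theta> \<delta>"] by (simp add: arc_space)
qed

lemma phi_mono: "\<delta> \<le> \<delta>' \<Longrightarrow> phi \<theta> \<delta> \<le> phi \<theta> \<delta>'"
proof -
  assume d: "\<delta> \<le> \<delta>'"
  interpret fm: finite_measure "arclength \<Omega>" by (rule arc_finite)
  have "Cplus \<Omega> \<theta> \<delta>' \<in> sets (arclength \<Omega>)" unfolding arc_sets using Cplus_closed by (simp add: borel_closed)
  thus ?thesis unfolding phi_def using Cplus_mono[OF d] by (intro fm.finite_measure_mono)
qed

lemma Lambda_eq: "Lambda \<Omega> \<theta> \<delta> = max (phi \<theta> \<delta>) (phi (-\<theta>) \<delta>)"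
  unfolding Lambda_def phi_def Cminus_eq ..

lemma Lambda_pow: assumes "q > 0"
  shows "Lambda \<Omega> \<theta> \<delta> powr q \<le> phi \<theta> \<delta> powr q + phi (-\<theta>) \<delta> powr q"
proof -
  have "Lambda \<Omega> \<theta> \<delta> powr q = phi \<theta> \<delta> powr q \<or> Lambda \<Omega> \<theta> \<delta> powr q = phi (-\<theta>) \<delta> powr q"
    unfolding Lambda_eq by (simp add: max_def)
  moreover have "0 \<le> phi \<theta> \<delta> powr q" "0 \<le> phi (-\<theta>) \<delta> powr q" by simp_all
  ultimately show ?thesis by linarith
qed

lemma dyadic_exists: fixes \<delta> \<delta>0 :: real assumes "0 < \<delta>" "\<delta> < \<delta>0"
  shows "\<exists>j::nat. \<delta>0 / 2^Suc j < \<delta> \<and> \<delta> \<le> \<delta>0 / 2^j"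
proof -
  obtain n :: nat where n: "\<delta>0 / \<delta> < 2^n" using real_arch_pow[of 2 "\<delta>0 / \<delta>"] by auto
  have ex: "\<exists>j::nat. \<delta>0 / 2^Suc j < \<delta>"
  proof
    have "\<delta>0 < 2^n * \<delta>" using n assms by (simp add: field_simps)
    hence "\<delta>0 / 2^n < \<delta>" by (simp add: field_simps)
    moreover have "\<delta>0 / 2^Suc n \<le> \<delta>0 / 2^n" using assms by (simp add: divide_left_mono)
    ultimately show "\<delta>0 / 2^Suc n < \<delta>" by linarith
  qed
  define j where "j = (LEAST j::nat. \<delta>0 / 2^Suc j < \<delta>)"
  have j1: "\<delta>0 / 2^Suc j < \<delta>" unfolding j_def by (rule LeastI_ex[OF ex])
  have j2: "\<delta> \<le> \<delta>0 / 2^j"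
  proof (cases j)
    case 0 thus ?thesis using assms by simp
  next
    case (Suc k)
    have "\<not> \<delta>0 / 2^Suc k < \<delta>" using not_less_Least[of k "\<lambda>j. \<delta>0 / 2^Suc j < \<delta>"] Suc unfolding j_def by simp
    thus ?thesis using Suc by simp
  qed
  show ?thesis using j1 j2 by blast
qed

lemma dyadic_upper:
  assumes q: "q > 0" and d0: "\<delta>0 > 0"
  shows "(\<integral>\<^sup>+ \<delta>\<in>{0<..<\<delta>0}. ennreal (Lambda \<Omega> \<theta> \<delta> powr q / \<delta>) \<partial>lborel)
    \<le> (\<Sum>j. ennreal (phi \<theta> (\<delta>0 / 2^j) powr q + phi (-\<theta>) (\<delta>0 / 2^j) powr q))"
proof -
  define c where "c j = phi \<theta> (\<delta>0 / 2^j) powr q + phi (-\<theta>) (\<delta>0 / 2^j) powr q" for j :: nat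
  have c0: "0 \<le> c j" for j unfolding c_def by simp
  define I where "I j = {\<delta>0 / 2^Suc j <.. \<delta>0 / 2^j}" for j :: nat
  define F where "F j \<delta> = ennreal (c j * 2^Suc j / \<delta>0) * indicator (I j) \<delta>" for j :: nat and \<delta> :: real
  have pw: "ennreal (Lambda \<Omega> \<theta> \<delta> powr q / \<delta>) * indicator {0<..<\<delta>0} \<delta> \<le> (\<Sum>j. F j \<delta>)" for \<delta>
  proof (cases "\<delta> \<in> {0<..<\<delta>0}")
    case False thus ?thesis by simp
  next
    case True
    then obtain j where j: "\<delta>0 / 2^Suc j < \<delta>" "\<delta> \<le> \<delta>0 / 2^j" using dyadic_exists by auto
    have dpos: "\<delta> > 0" using True by simp
    have "Lambda \<Omega> \<theta> \<delta> powr q \<le> phi \<theta> \<delta> powr q + phi (-\<theta>) \<delta> powr q" by (rule Lambda_pow[OF q])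
    also have "\<dots> \<le> c j" unfolding c_def
      using j(2) q by (intro add_mono powr_mono2 phi_mono phi_nonneg) auto
    finally have L1: "Lambda \<Omega> \<theta> \<delta> powr q \<le> c j" .
    have L2: "1 / \<delta> \<le> 2^Suc j / \<delta>0"
      using j(1) dpos d0 by (simp add: field_simps)
    have "Lambda \<Omega> \<theta> \<delta> powr q / \<delta> \<le> c j * (2^Suc j / \<delta>0)"
    proof -
      have "Lambda \<Omega> \<theta> \<delta> powr q / \<delta> = Lambda \<Omega> \<theta> \<delta> powr q * (1 / \<delta>)" by simp
      also have "\<dots> \<le> c j * (2^Suc j / \<delta>0)" using L1 L2 c0[of j] dpos by (intro mult_mono) auto
      finally show ?thesis .
    qed
    hence "ennreal (Lambda \<Omega> \<theta> \<delta> powr q / \<delta>) * indicator {0<..<\<delta>0} \<delta> \<le> F j \<delta>"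
      unfolding F_def I_def using True j by (auto intro!: ennreal_leI)
    also have "F j \<delta> \<le> (\<Sum>j. F j \<delta>)"
      using sum_le_suminf[OF summableI, of "{j}" "\<lambda>j. F j \<delta>"] by simp
    finally show ?thesis .
  qed
  have "(\<integral>\<^sup>+ \<delta>\<in>{0<..<\<delta>0}. ennreal (Lambda \<Omega> \<theta> \<delta> powr q / \<delta>) \<partial>lborel) \<le> (\<integral>\<^sup>+ \<delta>. (\<Sum>j. F j \<delta>) \<partial>lborel)"
    by (intro nn_integral_mono pw)
  also have "\<dots> = (\<Sum>j. \<integral>\<^sup>+ \<delta>. F j \<delta> \<partial>lborel)"
    by (rule nn_integral_suminf) (simp add: F_def I_def)
  also have "\<dots> = (\<Sum>j. ennreal (c j))"
  proof (rule suminf_cong)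
    fix j
    have le: "\<delta>0 / 2^Suc j \<le> \<delta>0 / 2^j" using d0 by (simp add: divide_left_mono)
    have "(\<integral>\<^sup>+ \<delta>. F j \<delta> \<partial>lborel) = ennreal (c j * 2^Suc j / \<delta>0) * emeasure lborel (I j)"
      unfolding F_def by (rule nn_integral_cmult_indicator) (simp add: I_def)
    also have "\<dots> = ennreal (c j * 2^Suc j / \<delta>0) * ennreal (\<delta>0 / 2^j - \<delta>0 / 2^Suc j)"
      unfolding I_def using le by simp
    also have "\<dots> = ennreal (c j * 2^Suc j / \<delta>0 * (\<delta>0 / 2^j - \<delta>0 / 2^Suc j))"
      using c0[of j] d0 le by (intro ennreal_mult[symmetric]) auto
    also have "c j * 2^Suc j / \<delta>0 * (\<delta>0 / 2^j - \<delta>0 / 2^Suc j) = c j"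
      using d0 by (simp add: field_simps)
    finally show "(\<integral>\<^sup>+ \<delta>. F j \<delta> \<partial>lborel) = ennreal (c j)" .
  qed
  finally show ?thesis unfolding c_def .
qed

end

context dom begin

definition "AA q = (SUP f\<in>{f. Cc f \<and> lq_norm q f = 1}. lq_norm_enn q (maxop \<Omega> f))"

lemma hs_pos: obtains r where "r > 0" "\<And>\<theta>. norm \<theta> = 1 \<Longrightarrow> r \<le> hs \<Omega> \<theta>"
proof -
  obtain e where e: "e > 0" "ball 0 e \<subseteq> \<Omega>" using op z open_contains_ball by blast
  have "e/2 \<le> hs \<Omega> \<theta>" if th: "norm \<theta> = 1" for \<theta>
  proof -
    have "(e/2) *\<^sub>R \<theta> \<in> ball 0 e" using e th by simp
    hence "(e/2) *\<^sub>R \<theta> \<in> closure \<Omega>" using e closure_subset by blast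
    from hs_ge[OF this, of \<theta>] show ?thesis using th by (simp add: norm_eq_1)
  qed
  thus ?thesis using that[of "e/2"] e by simp
qed

lemma pos_lemma:
  assumes th: "norm \<theta> = 1" and d: "\<delta> > 0" and q: "q \<ge> 1" and p: "phi \<theta> \<delta> > 0"
  shows "AA q > 0"
proof -
  have "enn_root q (ennreal ((\<Sum>j\<in>{0::nat}. measure (arclength \<Omega>) (Cplus \<Omega> \<theta> (\<delta> / 2^j)) powr q) / 16)) \<le> AA q"
    unfolding AA_def by (rule KL[OF th d q]) auto
  moreover have "enn_root q (ennreal ((\<Sum>j\<in>{0::nat}. measure (arclength \<Omega>) (Cplus \<Omega> \<theta> (\<delta> / 2^j)) powr q) / 16)) > 0"
    using p unfolding phi_def by (simp add: enn_root_ennreal)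
  ultimately show ?thesis by (rule order.strict_trans2[rotated])
qed

lemma tail_bound:
  assumes th: "norm \<theta> = 1" and q: "q \<ge> 1" and d0: "\<delta>0 > 0" and fin: "AA q < \<infinity>"
    and r: "r > 0" "\<And>\<theta>. norm \<theta> = 1 \<Longrightarrow> r \<le> hs \<Omega> \<theta>" and m: "\<delta>0 < 2^m * r"
  shows "(\<Sum>j. ennreal (phi \<theta> (\<delta>0 / 2^j) powr q)) \<le> ennreal (real m * PP powr q + 16 * enn2real (AA q) powr q)"
proof (rule suminf_le_const[OF summableI])
  fix M :: nat
  define a where "a = enn2real (AA q)"
  have a0: "a \<ge> 0" unfolding a_def by simp
  have Aa: "AA q = ennreal a" unfolding a_def using fin by simp
  have q0: "q > 0" using q by simp
  let ?f = "\<lambda>j. phi \<theta> (\<delta>0 / 2^j) powr q"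
  have f0: "0 \<le> ?f j" for j by simp
  have s1: "sum ?f ({..<M} \<inter> {..<m}) \<le> real m * PP powr q"
  proof -
    have "sum ?f ({..<M} \<inter> {..<m}) \<le> of_nat (card ({..<M} \<inter> {..<m})) * PP powr q"
      using phi_nonneg phi_le q0 by (intro sum_bounded_above powr_mono2) auto
    also have "\<dots> \<le> real m * PP powr q"
    proof (rule mult_right_mono)
      have "card ({..<M} \<inter> {..<m}) \<le> card {..<m}" by (intro card_mono) auto
      thus "real (card ({..<M} \<inter> {..<m})) \<le> real m" by simp
    qed simp
    finally show ?thesis .
  qed
  define J where "J = {..<M} - {..<m}"
  have h0: "hs \<Omega> \<theta> > 0" using r th by fastforce
  have disj: "2^i * hs \<Omega> \<theta> < 2^j * hs \<Omega> \<theta> - \<delta>0" if "i \<in> J" "j \<in> J" "i < j" for i j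
  proof -
    have "(2::real)^Suc i \<le> 2^j" using that(3) by (intro power_increasing) auto
    hence "2 * 2^i * hs \<Omega> \<theta> \<le> 2^j * hs \<Omega> \<theta>" using h0 by (intro mult_right_mono) auto
    moreover have "(2::real)^m \<le> 2^i" using that(1) unfolding J_def by (intro power_increasing) auto
    hence "2^m * r \<le> 2^i * hs \<Omega> \<theta>" using r(1) r(2)[OF th] by (intro mult_mono) auto
    ultimately show ?thesis using m by linarith
  qed
  have s2: "sum ?f J \<le> 16 * a powr q"
  proof -
    have "enn_root q (ennreal ((\<Sum>j\<in>J. measure (arclength \<Omega>) (Cplus \<Omega> \<theta> (\<delta>0 / 2^j)) powr q) / 16)) \<le> AA q"
      unfolding AA_def by (rule KL[OF th d0 q]) (use disj J_def in auto)
    hence "ennreal ((sum ?f J / 16) powr (1/q)) \<le> ennreal a" unfolding Aa phi_def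
      by (subst (asm) enn_root_ennreal) (auto intro: sum_nonneg)
    hence le: "(sum ?f J / 16) powr (1/q) \<le> a" using a0 by (simp add: ennreal_le_iff)
    have "sum ?f J / 16 = ((sum ?f J / 16) powr (1/q)) powr q"
      using q0 by (simp add: powr_powr sum_nonneg)
    also have "\<dots> \<le> a powr q" using le q0 by (intro powr_mono2) auto
    finally show ?thesis by simp
  qed
  have "sum ?f {..<M} = sum ?f ({..<M} \<inter> {..<m}) + sum ?f J" unfolding J_def by (rule sum.Int_Diff) simp
  also have "\<dots> \<le> real m * PP powr q + 16 * a powr q" using s1 s2 by simp
  finally have "sum ?f {..<M} \<le> real m * PP powr q + 16 * a powr q" .
  thus "(\<Sum>j<M. ennreal (?f j)) \<le> ennreal (real m * PP powr q + 16 * enn2real (AA q) powr q)"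
  proof -
    have "(\<Sum>j<M. ennreal (?f j)) = ennreal (sum ?f {..<M})" by (rule sum_ennreal) simp
    also have "\<dots> \<le> ennreal (real m * PP powr q + 16 * enn2real (AA q) powr q)"
      using \<open>sum ?f {..<M} \<le> real m * PP powr q + 16 * a powr q\<close> unfolding a_def by (rule ennreal_leI)
    finally show ?thesis .
  qed
qed

end

context dom begin

definition "II q \<delta>0 \<theta> = (\<integral>\<^sup>+ \<delta>\<in>{0<..<\<delta>0}. ennreal (Lambda \<Omega> \<theta> \<delta> powr q / \<delta>) \<partial>lborel)"

lemma enn_root_zero: "enn_root q 0 = 0" unfolding enn_root_def by simp

lemma main_lemma:
  assumes d0: "\<delta>0 > 0" and q: "q \<ge> 1"
  shows "\<exists>c>0. AA q \<ge> ennreal c * (SUP \<theta>\<in>sphere 0 1. enn_root q (II q \<delta>0 \<theta>))"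
proof (cases "AA q = \<infinity>")
  case True thus ?thesis by (intro exI[of _ 1]) simp
next
  case False
  hence fin: "AA q < \<infinity>" by (simp add: top.not_eq_extremum)
  have q0: "q > 0" using q by simp
  let ?B = "SUP \<theta>\<in>sphere 0 1. enn_root q (II q \<delta>0 \<theta>)"
  obtain r where r: "r > 0" "\<And>\<theta>. norm \<theta> = 1 \<Longrightarrow> r \<le> hs \<Omega> \<theta>" using hs_pos by blast
  obtain m :: nat where m: "\<delta>0 / r < 2^m" using real_arch_pow[of 2 "\<delta>0 / r"] by auto
  have m': "\<delta>0 < 2^m * r" using m r(1) by (simp add: field_simps)
  define Z where "Z = real m * PP powr q + 16 * enn2real (AA q) powr q"
  have Z0: "Z \<ge> 0" unfolding Z_def by simp
  have Ib: "II q \<delta>0 \<theta> \<le> ennreal (2 * Z)" if th: "\<theta> \<in> sphere 0 1" for \<theta>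
  proof -
    have n1: "norm \<theta> = 1" "norm (-\<theta>) = 1" using th by auto
    have "II q \<delta>0 \<theta> \<le> (\<Sum>j. ennreal (phi \<theta> (\<delta>0 / 2^j) powr q + phi (-\<theta>) (\<delta>0 / 2^j) powr q))"
      unfolding II_def by (rule dyadic_upper[OF q0 d0])
    also have "\<dots> = (\<Sum>j. ennreal (phi \<theta> (\<delta>0 / 2^j) powr q) + ennreal (phi (-\<theta>) (\<delta>0 / 2^j) powr q))"
      by (simp add: ennreal_plus)
    also have "\<dots> = (\<Sum>j. ennreal (phi \<theta> (\<delta>0 / 2^j) powr q)) + (\<Sum>j. ennreal (phi (-\<theta>) (\<delta>0 / 2^j) powr q))"
      by (rule suminf_add[OF summableI summableI, symmetric])
    also have "\<dots> \<le> ennreal Z + ennreal Z" unfolding Z_def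
      by (intro add_mono tail_bound[OF _ q d0 fin r m'] n1)
    also have "\<dots> = ennreal (2 * Z)" using Z0 by (simp add: ennreal_plus[symmetric])
    finally show ?thesis .
  qed
  have Bfin: "?B < \<infinity>"
  proof -
    have "?B \<le> enn_root q (ennreal (2 * Z))" by (intro SUP_least enn_root_mono[OF q0] Ib)
    also have "\<dots> < \<infinity>" using Z0 by (simp add: enn_root_ennreal)
    finally show ?thesis .
  qed
  show ?thesis
  proof (cases "?B = 0")
    case True thus ?thesis by (intro exI[of _ 1]) simp
  next
    case False
    hence "0 < ?B" by (simp add: zero_less_iff_neq_zero)
    then obtain \<theta> where th: "\<theta> \<in> sphere 0 1" and p: "0 < enn_root q (II q \<delta>0 \<theta>)" by (auto simp: less_SUP_iff)
    have "II q \<delta>0 \<theta> \<noteq> 0" using p enn_root_zero[of q] by auto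
    then obtain \<delta> where dd: "\<delta> \<in> {0<..<\<delta>0}" and ne: "Lambda \<Omega> \<theta> \<delta> powr q / \<delta> \<noteq> 0"
    proof -
      assume hyp: "\<And>\<delta>. \<delta> \<in> {0<..<\<delta>0} \<Longrightarrow> Lambda \<Omega> \<theta> \<delta> powr q / \<delta> \<noteq> 0 \<Longrightarrow> thesis"
      assume nz: "II q \<delta>0 \<theta> \<noteq> 0"
      show thesis
      proof (rule ccontr)
        assume "\<not> thesis"
        hence z0: "ennreal (Lambda \<Omega> \<theta> \<delta> powr q / \<delta>) * indicator {0<..<\<delta>0} \<delta> = 0" for \<delta>
          using hyp by (cases "\<delta> \<in> {0<..<\<delta>0}") auto
        have "II q \<delta>0 \<theta> = 0" unfolding II_def by (simp only: z0) simp
        thus False using nz by simp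
      qed
    qed
    have "Lambda \<Omega> \<theta> \<delta> \<noteq> 0" using ne by auto
    hence "phi \<theta> \<delta> > 0 \<or> phi (-\<theta>) \<delta> > 0" unfolding Lambda_eq using phi_nonneg[of \<theta> \<delta>] phi_nonneg[of "-\<theta>" \<delta>]
      by (auto simp: max_def split: if_splits)
    moreover have "norm \<theta> = 1" "norm (-\<theta>) = 1" using th by auto
    moreover have dpos: "\<delta> > 0" using dd by simp
    ultimately have Apos: "AA q > 0"
    proof (elim disjE)
      assume "phi \<theta> \<delta> > 0" thus ?thesis using pos_lemma[OF \<open>norm \<theta> = 1\<close> dpos q] by simp
    next
      assume "phi (-\<theta>) \<delta> > 0" thus ?thesis using pos_lemma[OF \<open>norm (-\<theta>) = 1\<close> dpos q] by simp
    qed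
    define a where "a = enn2real (AA q)"
    define b where "b = enn2real ?B"
    have Aa: "AA q = ennreal a" unfolding a_def using fin by simp
    have Bb: "?B = ennreal b" unfolding b_def using Bfin by simp
    have "0 < ennreal a" using Apos unfolding Aa .
    hence a0: "a > 0" by simp
    have "0 < ennreal b" using \<open>0 < ?B\<close> unfolding Bb .
    hence b0: "b > 0" by simp
    show ?thesis
    proof (intro exI[of _ "a / b"] conjI)
      show "a / b > 0" using a0 b0 by simp
      have "ennreal (a / b) * ?B = ennreal (a / b * b)" unfolding Bb using a0 b0 by (intro ennreal_mult[symmetric]) auto
      also have "\<dots> = AA q" using b0 Aa by simp
      finally show "ennreal (a / b) * ?B \<le> AA q" by simp
    qed
  qed
qed

end

theorem mainTheorem3:
  fixes \<Omega> :: "(real^2) set" and \<delta>0 q :: real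
  assumes "open \<Omega>" and "convex \<Omega>" and "compact (closure \<Omega>)" and "0 \<in> \<Omega>"
    and "\<delta>0 > 0"
    and "\<forall>\<theta>\<in>sphere 0 1. \<forall>\<delta>. 0 < \<delta> \<and> \<delta> < \<delta>0 \<longrightarrow> Cplus \<Omega> \<theta> \<delta> \<inter> Cminus \<Omega> \<theta> \<delta> = {}"
    and "1 \<le> q"
  shows "\<exists>c>0. (SUP f\<in>{f. Cc f \<and> lq_norm q f = 1}. lq_norm_enn q (maxop \<Omega> f))
           \<ge> ennreal c * (SUP \<theta>\<in>sphere 0 1.
               enn_root q (\<integral>\<^sup>+ \<delta>\<in>{0<..<\<delta>0}. ennreal (Lambda \<Omega> \<theta> \<delta> powr q / \<delta>) \<partial>lborel))"
proof -
  interpret dom \<Omega> using assms(1-4) by unfold_locales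
  show ?thesis using main_lemma[OF assms(5,7)] unfolding AA_def II_def .
qed

end
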